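(* Let $\alpha\in(0,1]$ and $\mathbf u=(u_1,\dots,u_m)\in[0,1]^m$ with $m\ge1$. Let $k_1,\dots,k_l\in\{1,\dots,m\}$ be distinct with $\sum_{i=1}^lu_{k_i}\le\alpha l$. Then $H_{\mathrm o}([\mathbf u])\preccurlyeq[(u_{k_1},\dots,u_{k_l})]$. Moreover, if $H_{\mathrm o}([\mathbf u])=\varnothing$, then every nonempty $S\subset\{1,\dots,m\}$ satisfies $\sum_{i\in S}u_i>\alpha|S|$.
   Context: $\mathcal S_{\mathrm o}=\bigcup_{m\ge1}\{(v_1,\dots,v_m)\in[0,1]^m:v_1\le\cdots\le v_m\}\cup\{\varnothing\}$, where $\varnothing$ is the vector of length $0$; $\dim(\mathbf u)$ is the length of $\mathbf u$. Partial order: for $\mathbf u,\mathbf v\in\mathcal S_{\mathrm o}$, $\mathbf u\preccurlyeq\mathbf v$ iff $\dim(\mathbf u)\ge\dim(\mathbf v)$ and $u_i\le v_i$ for $i=1,\dots,\dim(\mathbf v)$ (in particular $\mathbf u\preccurlyeq\varnothing$ for all $\mathbf u$). For a finite vector $\mathbf v$, $[\mathbf v]$ is its order statistic (components sorted increasingly), $[\varnothing]=\varnothing$; for $l=0$, $[(u_{k_1},\dots,u_{k_l})]=\varnothing$. For $\mathbf u=(u_1,\dots,u_d)\in\mathcal S_{\mathrm o}$ with $d\ge1$, $I_{\mathrm o}(\mathbf u)=\max\{n\in\{0,\dots,d\}:\sum_{i=1}^nu_i\le\alpha n\}$, and $I_{\mathrm o}(\varnothing)=0$; $H_{\mathrm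 o}(\mathbf u)=(u_1,\dots,u_{I_{\mathrm o}(\mathbf u)})$ if $I_{\mathrm o}(\mathbf u)\ge1$ and $H_{\mathrm o}(\mathbf u)=\varnothing$ otherwise. *)

theory Defs
  imports Complex_Main
begin

text \<open>Finite vectors are represented as lists of reals (index i of the paper is
  list position i-1). The order statistic [v] is List.sort v; the empty vector is [].\<close>

definition ord_stat :: "real list \<Rightarrow> real list" where
  "ord_stat v = sort v"

definition vprec :: "real list \<Rightarrow> real list \<Rightarrow> bool" where
  "vprec u v \<longleftrightarrow> length u \<ge> length v \<and> (\<forall>i < length v. u ! i \<le> v ! i)"

definition I_o :: "real \<Rightarrow> real list \<Rightarrow> nat" where
  "I_o \<alpha> u = Max {n. n \<le> length u \<and> sum_list (take n u) \<le> \<alpha> * real n}"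

definition H_o :: "real \<Rightarrow> real list \<Rightarrow> real list" where
  "H_o \<alpha> u = take (I_o \<alpha> u) u"

end

theory Submission
  imports Defs "HOL-Library.Multiset"
begin

lemma insort_le:
  assumes "sorted zs" "i < length zs"
  shows "insort x zs ! i \<le> zs ! i"
  using assms
proof (induction zs arbitrary: i)
  case Nil then show ?case by simp
next
  case (Cons z zs)
  show ?case
  proof (cases i)
    case 0 then show ?thesis by auto
  next
    case (Suc j)
    show ?thesis
    proof (cases "x \<le> z")
      case True
      have "(z#zs) ! j \<le> (z#zs) ! Suc j"
        using Cons.prems Suc by (intro sorted_nth_mono) auto
      then show ?thesis using True Suc by simp
    next
      case False
      then show ?thesis using Cons Suc by auto
    qed
  qed
qed

lemma sort_append_le:
  "i < length (sort ys) \<Longrightarrow> sort (zs @ ys) ! i \<le> sort ys ! i"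
proof (induction zs arbitrary: i)
  case Nil then show ?case by simp
next
  case (Cons z zs)
  have "sort (z # zs @ ys) ! i = insort z (sort (zs @ ys)) ! i" by simp
  also have "\<dots> \<le> sort (zs @ ys) ! i"
    using Cons.prems by (intro insort_le) auto
  also have "\<dots> \<le> sort ys ! i" using Cons by auto
  finally show ?case by simp
qed

lemma sort_sub_le:
  fixes xs ys :: "real list"
  assumes "mset ys \<subseteq># mset xs" "i < length ys"
  shows "sort xs ! i \<le> sort ys ! i"
proof -
  obtain M where M: "mset xs = mset ys + M"
    using assms(1) by (metis subset_mset.le_iff_add)
  obtain zs where zs: "mset zs = M" by (metis ex_mset)
  have "mset xs = mset (zs @ ys)" using M zs by (simp add: add.commute)
  hence "sort xs = sort (zs @ ys)"
    by (metis properties_for_sort mset_sort sorted_sort)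
  thus ?thesis using sort_append_le[of i ys zs] assms(2) by simp
qed

lemma part1:
  fixes \<alpha> :: real and u :: "real list" and ks :: "nat list"
  assumes ks_dist: "distinct ks"
    and ks_range: "\<forall>k \<in> set ks. k < length u"
    and ks_sum: "(\<Sum>k\<leftarrow>ks. u ! k) \<le> \<alpha> * real (length ks)"
  shows "vprec (H_o \<alpha> (ord_stat u)) (ord_stat (map (\<lambda>k. u ! k) ks))"
proof -
  let ?v = "sort u" and ?w = "sort (map (\<lambda>k. u ! k) ks)"
  let ?l = "length ks"
  have sub: "mset (map (\<lambda>k. u ! k) ks) \<subseteq># mset u"
  proof -
    have "map (\<lambda>k. u ! k) ks = map (\<lambda>k. u ! k) ks" by simp
    have "mset ks \<subseteq># mset [0..<length u]"
    proof -
      have "mset ks = mset_set (set ks)" using ks_dist by (simp add: mset_set_set)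
      moreover have "mset [0..<length u] = mset_set (set [0..<length u])"
        by (simp add: mset_set_set)
      moreover have "set ks \<subseteq> set [0..<length u]" using ks_range by auto
      ultimately show ?thesis by (metis subset_imp_msubset_mset_set finite_set)
    qed
    hence "image_mset (\<lambda>k. u ! k) (mset ks) \<subseteq># image_mset (\<lambda>k. u ! k) (mset [0..<length u])"
      by (rule image_mset_subseteq_mono)
    moreover have "map (\<lambda>k. u ! k) [0..<length u] = u" by (simp add: map_nth)
    ultimately show ?thesis by (metis mset_map)
  qed
  have lw: "length ?w = ?l" by simp
  have le: "\<And>i. i < ?l \<Longrightarrow> ?v ! i \<le> ?w ! i"
    using sort_sub_le[OF sub] by simp
  have lel: "?l \<le> length u"
    using size_mset_mono[OF sub] by simp
  have "sum_list (take ?l ?v) = (\<Sum>i<?l. ?v ! i)"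
    using lel by (simp add: sum_list_sum_nth atLeast0LessThan min_def)
  also have "\<dots> \<le> (\<Sum>i<?l. ?w ! i)" by (intro sum_mono le) auto
  also have "\<dots> = sum_list ?w"
    by (simp add: sum_list_sum_nth atLeast0LessThan)
  also have "\<dots> = (\<Sum>k\<leftarrow>ks. u ! k)"
    by (metis mset_sort sum_mset_sum_list mset_map)
  finally have s: "sum_list (take ?l ?v) \<le> \<alpha> * real ?l" using ks_sum by simp
  let ?A = "{n. n \<le> length ?v \<and> sum_list (take n ?v) \<le> \<alpha> * real n}"
  have fin: "finite ?A" by (rule finite_subset[of _ "{..length ?v}"]) auto
  have "?l \<in> ?A" using s lel by simp
  hence I1: "?l \<le> I_o \<alpha> ?v" unfolding I_o_def using fin by (rule Max_ge[rotated])
  have I2: "I_o \<alpha> ?v \<le> length ?v"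
    unfolding I_o_def using fin \<open>?l \<in> ?A\<close> by (subst Max_le_iff) auto
  show ?thesis unfolding vprec_def H_o_def ord_stat_def
    using I1 I2 le by auto
qed

theorem mainTheorem14:
  fixes \<alpha> :: real and u :: "real list" and ks :: "nat list"
  assumes alpha: "0 < \<alpha>" "\<alpha> \<le> 1"
    and m: "length u \<ge> 1"
    and u01: "\<forall>i < length u. 0 \<le> u ! i \<and> u ! i \<le> 1"
    and ks_dist: "distinct ks"
    and ks_range: "\<forall>k \<in> set ks. k < length u"
    and ks_sum: "(\<Sum>k\<leftarrow>ks. u ! k) \<le> \<alpha> * real (length ks)"
  shows "vprec (H_o \<alpha> (ord_stat u)) (ord_stat (map (\<lambda>k. u ! k) ks))
    \<and> (H_o \<alpha> (ord_stat u) = [] \<longrightarrow>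
        (\<forall>S. S \<subseteq> {..<length u} \<and> S \<noteq> {} \<longrightarrow> (\<Sum>i\<in>S. u ! i) > \<alpha> * real (card S)))"
proof (intro conjI impI allI)
  show "vprec (H_o \<alpha> (ord_stat u)) (ord_stat (map (\<lambda>k. u ! k) ks))"
    using part1 ks_dist ks_range ks_sum by blast
next
  fix S assume H: "H_o \<alpha> (ord_stat u) = []" and S: "S \<subseteq> {..<length u} \<and> S \<noteq> {}"
  show "(\<Sum>i\<in>S. u ! i) > \<alpha> * real (card S)"
  proof (rule ccontr)
    assume nt: "\<not> (\<Sum>i\<in>S. u ! i) > \<alpha> * real (card S)"
    let ?ks = "sorted_list_of_set S"
    have fS: "finite S" using S finite_subset by blast
    have "(\<Sum>k\<leftarrow>?ks. u ! k) = (\<Sum>i\<in>S. u ! i)"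
      using fS by (simp add: sum_list_distinct_conv_sum_set)
    hence "(\<Sum>k\<leftarrow>?ks. u ! k) \<le> \<alpha> * real (length ?ks)" using nt fS by simp
    moreover have "\<forall>k\<in>set ?ks. k < length u" using S fS by auto
    ultimately have "vprec (H_o \<alpha> (ord_stat u)) (ord_stat (map (\<lambda>k. u ! k) ?ks))"
      by (intro part1) auto
    hence "length ?ks \<le> 0" using H unfolding vprec_def ord_stat_def by simp
    thus False using S fS by simp
  qed
qed

end
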